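(* Let $(V,\|\cdot\|)$ be a normed plane and let $x,y\in V$ be distinct points such that $[xy]$ is parallel to a nondegenerate segment contained in the unit circle $S$. Let $p$ and $q$ be the centers of the two circles which contain $[xy]$ as a maximal segment, and let $l_p$ and $l_q$ be the lines through $p$ and $q$, respectively, parallel to $\langle xy\rangle$. Then $\mathrm{bis}(x,y)\cap\mathrm{conv}(l_p\cup l_q)$ is a curve from $p$ to $q$ which is homeomorphic to a compact interval.
   Context: A normed (Minkowski) plane $(V,\|\cdot\|)$ is a two-dimensional real vector space with a norm; $S=\{v:\|v\|=1\}$ is its unit circle. For $x,y\in V$, $[xy]$ denotes the closed segment and $\langle xy\rangle$ the line through $x,y$. For distinct $x,y$, $\mathrm{bis}(x,y)=\{z\in V:\|z-x\|=\|z-y\|\}$. A circle with center $c$ and radius $\lambda>0$ is $c+\lambda S$. A maximal segment of a circle is a nondegenerate segment contained in the circle that is not properly contained in any other segment contained in that circle. Fact used in the statement: if $[xy]$ is parallel to a nondegenerate segment of $S$, then there are exactly two circles containing $[xy]$ as a maximal segment, and their centers lie in the two different open half-planes determined by $\langle xy\rangle$. *)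

theory Defs
  imports "HOL-Analysis.Analysis"
begin

definition is_norm :: "(real^2 \<Rightarrow> real) \<Rightarrow> bool" where
  "is_norm N \<longleftrightarrow>
     (\<forall>v. 0 \<le> N v) \<and> (\<forall>v. N v = 0 \<longleftrightarrow> v = 0) \<and>
     (\<forall>c v. N (c *\<^sub>R v) = \<bar>c\<bar> * N v) \<and>
     (\<forall>v w. N (v + w) \<le> N v + N w)"

definition unit_circle :: "(real^2 \<Rightarrow> real) \<Rightarrow> (real^2) set" where
  "unit_circle N = {v. N v = 1}"

definition ncircle :: "(real^2 \<Rightarrow> real) \<Rightarrow> real^2 \<Rightarrow> real \<Rightarrow> (real^2) set" where
  "ncircle N c r = {v. N (v - c) = r}"

definition bis :: "(real^2 \<Rightarrow> real) \<Rightarrow> real^2 \<Rightarrow> real^2 \<Rightarrow> (real^2) set" where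
  "bis N x y = {z. N (z - x) = N (z - y)}"

definition seg_parallel :: "real^2 \<Rightarrow> real^2 \<Rightarrow> real^2 \<Rightarrow> real^2 \<Rightarrow> bool" where
  "seg_parallel u v a b \<longleftrightarrow> (\<exists>t. b - a = t *\<^sub>R (v - u))"

definition maximal_segment :: "(real^2) set \<Rightarrow> real^2 \<Rightarrow> real^2 \<Rightarrow> bool" where
  "maximal_segment C u v \<longleftrightarrow>
     u \<noteq> v \<and> closed_segment u v \<subseteq> C \<and>
     (\<forall>u' v'. closed_segment u v \<subseteq> closed_segment u' v' \<and> closed_segment u' v' \<subseteq> C
        \<longrightarrow> closed_segment u' v' = closed_segment u v)"

definition par_line :: "real^2 \<Rightarrow> real^2 \<Rightarrow> (real^2) set" where
  "par_line p d = {p + t *\<^sub>R d | t. True}"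

end

theory Submission
  imports Defs
begin

definition cr :: "real^2 \<Rightarrow> real^2 \<Rightarrow> real" where
  "cr d v = v$1 * d$2 - v$2 * d$1"

lemma cr_add[simp]: "cr d (u + v) = cr d u + cr d v" by (simp add: cr_def algebra_simps)
lemma cr_diff[simp]: "cr d (u - v) = cr d u - cr d v" by (simp add: cr_def algebra_simps)
lemma cr_scale[simp]: "cr d (c *\<^sub>R v) = c * cr d v" by (simp add: cr_def algebra_simps)
lemma cr_minus[simp]: "cr d (- v) = - cr d v" by (simp add: cr_def algebra_simps)
lemma cr_self[simp]: "cr d d = 0" by (simp add: cr_def algebra_simps)
lemma cr_zero[simp]: "cr d 0 = 0" by (simp add: cr_def)

lemma cr_ker:
  assumes "d \<noteq> 0" "cr d v = 0" shows "\<exists>t. v = t *\<^sub>R d"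
proof (cases "d$1 = 0")
  case True
  then have "d$2 \<noteq> 0" using assms(1) by (metis exhaust_2 vec_eq_iff zero_index)
  then show ?thesis using assms True
    by (intro exI[of _ "v$2 / d$2"]) (auto simp: vec_eq_iff forall_2 cr_def)
next
  case False
  then show ?thesis using assms
    by (intro exI[of _ "v$1 / d$1"]) (auto simp: vec_eq_iff forall_2 cr_def field_simps)
qed

lemma cr_cont[continuous_intros]: "continuous_on S (\<lambda>v. cr d v)"
  unfolding cr_def by (intro continuous_intros)

lemma cr_transversal:
  assumes "d \<noteq> 0" shows "\<exists>n. cr d n = 1"
proof -
  let ?D = "d$1^2 + d$2^2"
  have "?D > 0" using assms
    by (metis add.commute add_pos_nonneg exhaust_2 power2_less_0 sum_power2_gt_zero_iff vec_eq_iff zero_index linorder_not_le zero_le_power2)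
  define n :: "real^2" where "n = (\<chi> i. if i = 1 then d$2 / ?D else - d$1 / ?D)"
  have e: "d$2 * d$2 + d$1 * d$1 = ?D" by (simp add: power2_eq_square)
  have "cr d n = d$2 * (d$2 / ?D) + d$1 * (d$1 / ?D)" by (simp add: n_def cr_def)
  also have "\<dots> = (d$2 * d$2 + d$1 * d$1) / ?D" by (simp add: add_divide_distrib)
  also have "\<dots> = 1" unfolding e using \<open>?D > 0\<close> by (metis divide_self less_irrefl)
  finally show ?thesis by blast
qed

locale nplane =
  fixes N :: "real^2 \<Rightarrow> real"
  assumes isn: "is_norm N"
begin

lemma N_nonneg: "0 \<le> N v" using isn by (simp add: is_norm_def)
lemma N_eq0: "N v = 0 \<longleftrightarrow> v = 0" using isn by (simp add: is_norm_def)
lemma N_scale: "N (c *\<^sub>R v) = \<bar>c\<bar> * N v" using isn by (simp add: is_norm_def)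
lemma N_tri: "N (v + w) \<le> N v + N w" using isn by (simp add: is_norm_def)
lemma N_0[simp]: "N 0 = 0" using N_eq0 by simp
lemma N_minus: "N (- v) = N v" using N_scale[of "-1" v] by simp
lemma N_commute: "N (a - b) = N (b - a)" using N_minus[of "a - b"] by simp
lemma N_pos: "v \<noteq> 0 \<Longrightarrow> N v > 0" using N_nonneg N_eq0 by (metis order_le_less)
lemma N_rev: "N a - N b \<le> N (a - b)" using N_tri[of "a - b" b] by simp
lemma N_rev_abs: "\<bar>N a - N b\<bar> \<le> N (a - b)"
  using N_rev[of a b] N_rev[of b a] N_commute[of a b] by linarith

lemma N_le_norm: "\<exists>K>0. \<forall>v. N v \<le> K * norm v"
proof -
  let ?K = "N (axis 1 1) + N (axis 2 1) + 1"
  have "N v \<le> ?K * norm v" for v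
  proof -
    have v: "v = v$1 *\<^sub>R axis 1 1 + v$2 *\<^sub>R axis 2 1"
      by (simp add: vec_eq_iff forall_2 axis_def)
    have "N v \<le> N (v$1 *\<^sub>R axis 1 1) + N (v$2 *\<^sub>R axis 2 1)"
      by (subst v) (rule N_tri)
    also have "\<dots> = \<bar>v$1\<bar> * N (axis 1 1) + \<bar>v$2\<bar> * N (axis 2 1)" by (simp add: N_scale)
    also have "\<dots> \<le> norm v * N (axis 1 1) + norm v * N (axis 2 1)"
      by (intro add_mono mult_right_mono component_le_norm_cart N_nonneg)
    also have "\<dots> \<le> ?K * norm v" by (simp add: algebra_simps)
    finally show ?thesis .
  qed
  moreover have "?K > 0" using N_nonneg[of "axis 1 1"] N_nonneg[of "axis 2 1"] by linarith
  ultimately show ?thesis by blast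
qed

lemma N_cont[continuous_intros]: "continuous_on S N"
proof -
  obtain K where K: "K > 0" "\<And>v. N v \<le> K * norm v" using N_le_norm by blast
  show ?thesis unfolding continuous_on_iff
  proof (intro ballI allI impI)
    fix v e :: "_" assume "(e::real) > 0"
    show "\<exists>d>0. \<forall>x'\<in>S. dist x' v < d \<longrightarrow> dist (N x') (N v) < e"
    proof (intro exI[of _ "e / K"] conjI ballI impI)
      show "e / K > 0" using K \<open>e > 0\<close> by simp
      fix w assume "dist w v < e / K"
      then have "K * norm (w - v) < e" using K by (simp add: dist_norm field_simps)
      moreover have "\<bar>N w - N v\<bar> \<le> N (w - v)" by (rule N_rev_abs)
      ultimately show "dist (N w) (N v) < e" using K(2)[of "w - v"] by (simp add: dist_real_def)
    qed
  qed
qed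

lemma N_cont_comp[continuous_intros]: "continuous_on S f \<Longrightarrow> continuous_on S (\<lambda>x. N (f x))"
  using continuous_on_compose2[OF N_cont[of UNIV]] by auto

end

definition seg :: "(real^2 \<Rightarrow> real) \<Rightarrow> real^2 \<Rightarrow> real^2 \<Rightarrow> real \<Rightarrow> real \<Rightarrow> real \<Rightarrow> bool" where
  "seg N d w c \<alpha> \<beta> \<longleftrightarrow> \<alpha> < \<beta> \<and> c > 0 \<and> (\<forall>t\<in>{\<alpha>..\<beta>}. N (w + t *\<^sub>R d) = c)"

context nplane begin

lemma tp:
  assumes "a < b" "b < c"
  shows "(c - a) * N (w + b *\<^sub>R d) \<le> (c - b) * N (w + a *\<^sub>R d) + (b - a) * N (w + c *\<^sub>R d)"
proof -
  define \<mu> where "\<mu> = (c - b) / (c - a)"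
  have cb: "c - a > 0" using assms by simp
  have m1: "1 - \<mu> = (b - a) / (c - a)" using cb by (simp add: \<mu>_def field_simps)
  have eq: "w + b *\<^sub>R d = \<mu> *\<^sub>R (w + a *\<^sub>R d) + (1 - \<mu>) *\<^sub>R (w + c *\<^sub>R d)"
  proof -
    have "\<mu> *\<^sub>R (w + a *\<^sub>R d) + (1 - \<mu>) *\<^sub>R (w + c *\<^sub>R d) = w + (\<mu> * a + (1 - \<mu>) * c) *\<^sub>R d"
      by (simp add: algebra_simps)
    moreover have "\<mu> * a + (1 - \<mu>) * c = b"
    proof -
      have "\<mu> * (c - a) = c - b" using cb by (simp add: \<mu>_def)
      moreover have "\<mu> * a + (1 - \<mu>) * c = c - \<mu> * (c - a)" by (simp add: algebra_simps)
      ultimately show ?thesis by simp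
    qed
    ultimately show ?thesis by simp
  qed
  have "N (w + b *\<^sub>R d) \<le> N (\<mu> *\<^sub>R (w + a *\<^sub>R d)) + N ((1 - \<mu>) *\<^sub>R (w + c *\<^sub>R d))"
    unfolding eq by (rule N_tri)
  also have "\<dots> = \<mu> * N (w + a *\<^sub>R d) + (1 - \<mu>) * N (w + c *\<^sub>R d)"
    using assms cb by (simp add: N_scale m1 \<mu>_def)
  finally have "N (w + b *\<^sub>R d) \<le> \<mu> * N (w + a *\<^sub>R d) + (1 - \<mu>) * N (w + c *\<^sub>R d)" .
  then have "(c - a) * N (w + b *\<^sub>R d) \<le> (c - a) * (\<mu> * N (w + a *\<^sub>R d) + (1 - \<mu>) * N (w + c *\<^sub>R d))"
    using cb by simp
  also have "\<dots> = (c - b) * N (w + a *\<^sub>R d) + (b - a) * N (w + c *\<^sub>R d)"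
  proof -
    have "(c - a) * \<mu> = c - b" "(c - a) * (1 - \<mu>) = b - a" using cb unfolding m1 by (simp_all add: \<mu>_def)
    then show ?thesis by (simp add: distrib_left mult.assoc[symmetric])
  qed
  finally show ?thesis .
qed

lemma shift_mono:
  assumes "s < s'"
  shows "N (w + s *\<^sub>R d) - N (w + (s - 1) *\<^sub>R d) \<le> N (w + s' *\<^sub>R d) - N (w + (s' - 1) *\<^sub>R d)"
proof -
  let ?g = "\<lambda>t. N (w + t *\<^sub>R d)"
  consider "s' - 1 < s" | "s' - 1 = s" | "s' - 1 > s" by linarith
  then show ?thesis
  proof cases
    case 1
    define a where "a = s' - s"
    have a: "0 < a" "a < 1" using 1 assms by (auto simp: a_def)
    have h1: "?g (s' - 1) - ?g (s - 1) \<le> a * (?g s - ?g (s - 1))"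
      using tp[of "s - 1" "s' - 1" s w d] 1 assms by (simp add: a_def algebra_simps)
    have h2: "?g s - ?g (s' - 1) \<le> (1 - a) * (?g s' - ?g (s' - 1))"
      using tp[of "s' - 1" s s' w d] 1 assms by (simp add: a_def algebra_simps)
    have "?g s - ?g (s - 1) \<le> a * (?g s - ?g (s - 1)) + (1 - a) * (?g s' - ?g (s' - 1))"
      using h1 h2 by linarith
    then have "(1 - a) * (?g s - ?g (s - 1)) \<le> (1 - a) * (?g s' - ?g (s' - 1))"
      by (simp add: algebra_simps)
    then show ?thesis using a by simp
  next
    case 2
    then show ?thesis using tp[of "s - 1" s "s + 1" w d] by (simp add: algebra_simps)
  next
    case 3
    define b where "b = s' - s - 1"
    have b: "b > 0" using 3 by (simp add: b_def)
    have h1: "b * (?g s - ?g (s - 1)) \<le> ?g (s' - 1) - ?g s"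
      using tp[of "s - 1" s "s' - 1" w d] 3 by (simp add: b_def algebra_simps)
    have h2: "?g (s' - 1) - ?g s \<le> b * (?g s' - ?g (s' - 1))"
      using tp[of s "s' - 1" s' w d] 3 by (simp add: b_def algebra_simps)
    from h1 h2 have "b * (?g s - ?g (s - 1)) \<le> b * (?g s' - ?g (s' - 1))" by linarith
    then show ?thesis using b by simp
  qed
qed


lemma seg_L0:
  assumes "seg N d w c \<alpha> \<beta>" "N (w + \<tau> *\<^sub>R d) < c" shows False
proof -
  have a: "\<alpha> < \<beta>" "N (w + \<alpha> *\<^sub>R d) = c" "N (w + \<beta> *\<^sub>R d) = c"
    using assms(1) by (auto simp: seg_def)
  consider "\<tau> < \<alpha>" | "\<tau> \<in> {\<alpha>..\<beta>}" | "\<tau> > \<beta>" by force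
  then show False
  proof cases
    case 1
    have "(\<beta> - \<tau>) * c \<le> (\<beta> - \<alpha>) * N (w + \<tau> *\<^sub>R d) + (\<alpha> - \<tau>) * c"
      using tp[of \<tau> \<alpha> \<beta> w d] 1 a by simp
    moreover have "(\<beta> - \<alpha>) * N (w + \<tau> *\<^sub>R d) < (\<beta> - \<alpha>) * c" using a assms(2) by simp
    ultimately show False by (simp add: algebra_simps)
  next
    case 2 then show False using assms by (auto simp: seg_def)
  next
    case 3
    have "(\<tau> - \<alpha>) * c \<le> (\<tau> - \<beta>) * c + (\<beta> - \<alpha>) * N (w + \<tau> *\<^sub>R d)"
      using tp[of \<alpha> \<beta> \<tau> w d] 3 a by simp
    moreover have "(\<beta> - \<alpha>) * N (w + \<tau> *\<^sub>R d) < (\<beta> - \<alpha>) * c" using a assms(2) by simp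
    ultimately show False by (simp add: algebra_simps)
  qed
qed

lemma seg_A:
  assumes d: "d \<noteq> 0" and s: "seg N d w c \<alpha> \<beta>"
  shows "cr d w \<noteq> 0" "c * \<bar>cr d v\<bar> \<le> \<bar>cr d w\<bar> * N v"
proof -
  have c: "c > 0" using s by (simp add: seg_def)
  show w: "cr d w \<noteq> 0"
  proof
    assume "cr d w = 0"
    then obtain t where "w = t *\<^sub>R d" using cr_ker d by blast
    then have "N (w + (- t) *\<^sub>R d) < c" using c by simp
    then show False using seg_L0 s by blast
  qed
  show "c * \<bar>cr d v\<bar> \<le> \<bar>cr d w\<bar> * N v"
  proof (rule ccontr)
    assume h: "\<not> ?thesis"
    then have v: "cr d v \<noteq> 0" using N_nonneg[of v] by auto
    define u where "u = (cr d w / cr d v) *\<^sub>R v"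
    have cu: "cr d (u - w) = 0" using v by (simp add: u_def)
    obtain t where t: "u - w = t *\<^sub>R d" using cr_ker[OF d cu] by blast
    have "N u = \<bar>cr d w\<bar> * N v / \<bar>cr d v\<bar>" by (simp add: u_def N_scale abs_divide)
    also have "\<dots> < c" using h v by (simp add: divide_less_eq mult.commute)
    finally have "N (w + t *\<^sub>R d) < c" using t by (metis add.commute diff_add_cancel)
    then show False using seg_L0 s by blast
  qed
qed

lemma seg_C:
  assumes "d \<noteq> 0" "seg N d w c \<alpha> \<beta>" "cr d u = cr d w" shows "c \<le> N u"
proof -
  have "c * \<bar>cr d u\<bar> \<le> \<bar>cr d w\<bar> * N u" "cr d w \<noteq> 0" using seg_A[OF assms(1,2)] by auto
  then show ?thesis using assms(3) by (simp add: mult.commute)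
qed

lemma seg_fill:
  assumes d: "d \<noteq> 0" and s: "seg N d w c \<alpha> \<beta>"
    and a: "N (w + a *\<^sub>R d) = c" and b: "N (w + b *\<^sub>R d) = c" and "a \<le> \<tau>" "\<tau> \<le> b"
  shows "N (w + \<tau> *\<^sub>R d) = c"
proof -
  have ge: "c \<le> N (w + \<tau> *\<^sub>R d)" by (rule seg_C[OF d s]) simp
  have le: "N (w + \<tau> *\<^sub>R d) \<le> c"
  proof (cases "a < \<tau> \<and> \<tau> < b")
    case True
    have "(b - a) * N (w + \<tau> *\<^sub>R d) \<le> (b - \<tau>) * c + (\<tau> - a) * c"
      using tp[of a \<tau> b w d] True a b by simp
    also have "\<dots> = (b - a) * c" by (simp add: algebra_simps)
    finally show ?thesis using True by simp
  next
    case False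
    then have "\<tau> = a \<or> \<tau> = b" using assms by linarith
    then show ?thesis using a b by auto
  qed
  from ge le show ?thesis by simp
qed

lemma seg_ratio:
  assumes d: "d \<noteq> 0" and s1: "seg N d w1 c1 \<alpha>1 \<beta>1" and s2: "seg N d w2 c2 \<alpha>2 \<beta>2"
  shows "c2 * \<bar>cr d w1\<bar> = c1 * \<bar>cr d w2\<bar>"
proof -
  have n1: "N (w1 + \<alpha>1 *\<^sub>R d) = c1" and n2: "N (w2 + \<alpha>2 *\<^sub>R d) = c2"
    using s1 s2 by (auto simp: seg_def)
  have "c1 * \<bar>cr d (w2 + \<alpha>2 *\<^sub>R d)\<bar> \<le> \<bar>cr d w1\<bar> * N (w2 + \<alpha>2 *\<^sub>R d)" by (rule seg_A(2)[OF d s1])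
  moreover have "c2 * \<bar>cr d (w1 + \<alpha>1 *\<^sub>R d)\<bar> \<le> \<bar>cr d w2\<bar> * N (w1 + \<alpha>1 *\<^sub>R d)" by (rule seg_A(2)[OF d s2])
  ultimately show ?thesis using n1 n2 by (simp add: mult.commute)
qed


end

lemma seg_param:
  fixes x d :: "real^2"
  assumes "m \<le> M"
  shows "closed_segment (x + m *\<^sub>R d) (x + M *\<^sub>R d) = (\<lambda>t. x + t *\<^sub>R d) ` {m..M}"
proof -
  have lin: "linear (\<lambda>t::real. t *\<^sub>R d)" by (simp add: bounded_linear.linear bounded_linear_scaleR_left)
  have "closed_segment (x + m *\<^sub>R d) (x + M *\<^sub>R d) = (\<lambda>v. x + v) ` closed_segment (m *\<^sub>R d) (M *\<^sub>R d)"
    by (rule closed_segment_translation)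
  also have "closed_segment (m *\<^sub>R d) (M *\<^sub>R d) = (\<lambda>t. t *\<^sub>R d) ` closed_segment m M"
    using closed_segment_linear_image[OF lin, of m M] by simp
  also have "closed_segment m M = {m..M}" using assms by (simp add: closed_segment_eq_real_ivl)
  finally show ?thesis by (simp add: image_image)
qed

lemma inj_line:
  fixes x d :: "real^2"
  assumes "d \<noteq> 0" shows "inj (\<lambda>t. x + t *\<^sub>R d)"
  using assms by (auto simp: inj_on_def)

context nplane begin

lemma maxseg_seg:
  assumes "x \<noteq> y" "maximal_segment (ncircle N pc rc) x y" "rc > 0"
  shows "seg N (y - x) (x - pc) rc 0 1"
proof -
  have sub: "closed_segment x y \<subseteq> ncircle N pc rc" using assms(2) by (simp add: maximal_segment_def)
  have "closed_segment (x + 0 *\<^sub>R (y - x)) (x + 1 *\<^sub>R (y - x)) = (\<lambda>t. x + t *\<^sub>R (y - x)) ` {0..1}"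
    by (rule seg_param) simp
  then have "(\<lambda>t. x + t *\<^sub>R (y - x)) ` {0..1} \<subseteq> ncircle N pc rc" using sub by simp
  then have "\<forall>t\<in>{0..1}. N (x + t *\<^sub>R (y - x) - pc) = rc" by (auto simp: ncircle_def)
  then show ?thesis using assms(3) by (auto simp: seg_def algebra_simps)
qed

lemma transfer:
  assumes xy: "x \<noteq> y" and dd: "d = y - x" and mx: "maximal_segment (ncircle N pc rc) x y" and rc: "rc > 0"
    and s': "seg N d w' c' \<alpha>' \<beta>'" and lev: "c' * cr d (x - pc) = rc * cr d w'"
  shows "\<exists>a. pc + (rc / c') *\<^sub>R (w' + \<alpha>' *\<^sub>R d) = x + a *\<^sub>R d \<and> 0 \<le> a \<and> a + rc * (\<beta>' - \<alpha>') / c' \<le> 1"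
proof -
  have d: "d \<noteq> 0" using xy dd by simp
  have c': "c' > 0" "\<alpha>' < \<beta>'" using s' by (auto simp: seg_def)
  define k where "k = rc / c'"
  have k: "k > 0" using rc c' by (simp add: k_def)
  define u0 where "u0 = pc + k *\<^sub>R (w' + \<alpha>' *\<^sub>R d)"
  have "cr d (x - pc) = k * cr d w'" using lev c' by (simp add: k_def field_simps)
  then have "cr d (u0 - x) = 0" by (simp add: u0_def algebra_simps)
  then obtain a where a: "u0 - x = a *\<^sub>R d" using cr_ker d by blast
  define W where "W = x - pc"
  have sW: "seg N d W rc 0 1" using maxseg_seg[OF xy mx rc] dd by (simp add: W_def)
  define L where "L = k * (\<beta>' - \<alpha>')"
  have L: "L > 0" using k c' by (simp add: L_def)
  have onA: "N (W + \<tau> *\<^sub>R d) = rc" if "a \<le> \<tau>" "\<tau> \<le> a + L" for \<tau>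
  proof -
    define t where "t = \<alpha>' + (\<tau> - a) / k"
    have t: "t \<in> {\<alpha>'..\<beta>'}" using that k by (auto simp: t_def L_def field_simps)
    have "W + \<tau> *\<^sub>R d = u0 - pc + (\<tau> - a) *\<^sub>R d" using a by (simp add: W_def algebra_simps)
    also have "\<dots> = k *\<^sub>R (w' + t *\<^sub>R d)"
    proof -
      have kt: "k * t = k * \<alpha>' + (\<tau> - a)" using k by (simp add: t_def field_simps)
      have "k *\<^sub>R (w' + t *\<^sub>R d) = k *\<^sub>R w' + (k * t) *\<^sub>R d" by (simp add: scaleR_add_right)
      also have "\<dots> = k *\<^sub>R w' + (k * \<alpha>') *\<^sub>R d + (\<tau> - a) *\<^sub>R d" by (simp add: kt scaleR_add_left)
      finally show ?thesis by (simp add: u0_def algebra_simps)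
    qed
    finally have "N (W + \<tau> *\<^sub>R d) = k * N (w' + t *\<^sub>R d)" using k by (simp add: N_scale)
    also have "\<dots> = k * c'" using s' t by (simp add: seg_def)
    also have "\<dots> = rc" using c' by (simp add: k_def)
    finally show ?thesis .
  qed
  have on01: "N (W + \<tau> *\<^sub>R d) = rc" if "0 \<le> \<tau>" "\<tau> \<le> 1" for \<tau> using sW that by (simp add: seg_def)
  define m where "m = min 0 a"
  define M where "M = max 1 (a + L)"
  have mM: "m \<le> 0" "1 \<le> M" "m \<le> M" by (auto simp: m_def M_def)
  have NW: "N W = rc" using on01[of 0] by simp
  have Nm: "N (W + m *\<^sub>R d) = rc" using onA on01 L NW by (auto simp: m_def min_def)
  have NW1: "N (W + d) = rc" using on01[of 1] by simp
  have NM: "N (W + M *\<^sub>R d) = rc" using onA on01 L NW1 by (auto simp: M_def max_def)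
  have all: "N (W + t *\<^sub>R d) = rc" if "m \<le> t" "t \<le> M" for t
    by (rule seg_fill[OF d sW Nm NM that])
  have eq1: "closed_segment (x + m *\<^sub>R d) (x + M *\<^sub>R d) = (\<lambda>t. x + t *\<^sub>R d) ` {m..M}"
    using mM(3) by (rule seg_param)
  have eq2: "closed_segment x y = (\<lambda>t. x + t *\<^sub>R d) ` {0..1}"
    using seg_param[of 0 1 x d] dd by simp
  have sub1: "closed_segment x y \<subseteq> closed_segment (x + m *\<^sub>R d) (x + M *\<^sub>R d)"
    unfolding eq1 eq2 using mM by (intro image_mono) auto
  have sub2: "closed_segment (x + m *\<^sub>R d) (x + M *\<^sub>R d) \<subseteq> ncircle N pc rc"
    unfolding eq1 using all by (auto simp: ncircle_def W_def algebra_simps)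
  have "closed_segment (x + m *\<^sub>R d) (x + M *\<^sub>R d) = closed_segment x y"
    using mx sub1 sub2 unfolding maximal_segment_def by blast
  then have "(\<lambda>t. x + t *\<^sub>R d) ` {m..M} = (\<lambda>t. x + t *\<^sub>R d) ` {0..1}" using eq1 eq2 by simp
  then have "{m..M} = {0..(1::real)}" using inj_image_eq_iff[OF inj_line[OF d]] by blast
  then have "m = 0" "M = 1" using mM by (simp_all add: Icc_eq_Icc)
  then have "0 \<le> a" "a + L \<le> 1" by (auto simp: m_def M_def)
  moreover have "pc + (rc / c') *\<^sub>R (w' + \<alpha>' *\<^sub>R d) = x + a *\<^sub>R d"
    using a by (simp add: u0_def k_def algebra_simps)
  moreover have "L = rc * (\<beta>' - \<alpha>') / c'" by (simp add: L_def k_def)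
  ultimately show ?thesis by auto
qed

end

context nplane begin

lemma four_point:
  assumes "a < a'" "a' < b" "b < b'"
    and "N (w + a *\<^sub>R d) = c" "N (w + a' *\<^sub>R d) = c" "N (w + b *\<^sub>R d) = c" "N (w + b' *\<^sub>R d) = c"
    and "a \<le> \<tau>" "\<tau> \<le> b'"
  shows "N (w + \<tau> *\<^sub>R d) = c"
proof -
  let ?h = "\<lambda>t. N (w + t *\<^sub>R d)"
  have le: "?h \<tau> \<le> c"
  proof (cases "a < \<tau> \<and> \<tau> < b'")
    case True
    have "(b' - a) * ?h \<tau> \<le> (b' - \<tau>) * c + (\<tau> - a) * c" using tp[of a \<tau> b' w d] True assms by simp
    also have "\<dots> = (b' - a) * c" by (simp add: algebra_simps)
    finally show ?thesis using True by simp
  next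
    case False
    then have "\<tau> = a \<or> \<tau> = b'" using assms by linarith
    then show ?thesis using assms by auto
  qed
  have ge: "c \<le> ?h \<tau>"
  proof -
    consider "\<tau> < a'" | "\<tau> = a'" | "a' < \<tau> \<and> \<tau> < b" | "\<tau> = b" | "\<tau> > b" by linarith
    then show ?thesis
    proof cases
      case 1
      have "(b - \<tau>) * c \<le> (b - a') * ?h \<tau> + (a' - \<tau>) * c" using tp[of \<tau> a' b w d] 1 assms by simp
      then have "(b - a') * c \<le> (b - a') * ?h \<tau>" by (simp add: algebra_simps)
      then show ?thesis using assms by simp
    next
      case 3
      have "(\<tau> - a) * c \<le> (\<tau> - a') * c + (a' - a) * ?h \<tau>" using tp[of a a' \<tau> w d] 3 assms by simp
      then have "(a' - a) * c \<le> (a' - a) * ?h \<tau>" by (simp add: algebra_simps)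
      then show ?thesis using assms by simp
    next
      case 5
      have "(\<tau> - a') * c \<le> (\<tau> - b) * c + (b - a') * ?h \<tau>" using tp[of a' b \<tau> w d] 5 assms by simp
      then have "(b - a') * c \<le> (b - a') * ?h \<tau>" by (simp add: algebra_simps)
      then show ?thesis using assms by simp
    qed (use assms in auto)
  qed
  from le ge show ?thesis by simp
qed

end

locale setting = nplane +
  fixes x y p q :: "real^2" and rp rq :: real
  assumes xy: "x \<noteq> y" and pq: "p \<noteq> q" and rp: "rp > 0" and rq: "rq > 0"
    and mp: "maximal_segment (ncircle N p rp) x y"
    and mq: "maximal_segment (ncircle N q rq) x y"
begin

abbreviation "d \<equiv> y - x"

lemma d0: "d \<noteq> 0" using xy by simp
lemma cry: "cr d y = cr d x" by (simp add: cr_def algebra_simps)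

lemma segP: "seg N d (x - p) rp 0 1" by (rule maxseg_seg[OF xy mp rp])
lemma segQ: "seg N d (x - q) rq 0 1" by (rule maxseg_seg[OF xy mq rq])

lemma sign: "rq * cr d (x - p) = - rp * cr d (x - q)"
proof -
  have r: "rq * \<bar>cr d (x - p)\<bar> = rp * \<bar>cr d (x - q)\<bar>" by (rule seg_ratio[OF d0 segP segQ])
  have "rq * cr d (x - p) \<noteq> rp * cr d (x - q)"
  proof
    assume lev: "rq * cr d (x - p) = rp * cr d (x - q)"
    obtain a where a: "p + (rp / rq) *\<^sub>R (x - q + 0 *\<^sub>R d) = x + a *\<^sub>R d" "0 \<le> a" "a + rp * (1 - 0) / rq \<le> 1"
      using transfer[OF xy refl mp rp segQ lev] by blast
    obtain b where b: "0 \<le> b" "b + rq * (1 - 0) / rp \<le> 1"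
      using transfer[OF xy refl mq rq segP lev[symmetric]] by blast
    have "rp / rq \<le> 1" "rq / rp \<le> 1" using a b by auto
    then have "rp = rq" using rp rq by (simp add: divide_le_eq)
    then have "a = 0" using a rp by simp
    then have "p = q" using a \<open>rp = rq\<close> rp by (simp add: algebra_simps)
    then show False using pq by simp
  qed
  moreover have "\<bar>rq * cr d (x - p)\<bar> = \<bar>- rp * cr d (x - q)\<bar>" using r rp rq by (simp add: abs_mult)
  moreover have "\<And>u v::real. \<bar>u\<bar> = \<bar>- v\<bar> \<Longrightarrow> u \<noteq> v \<Longrightarrow> u = - v" by arith
  ultimately show ?thesis by (metis minus_mult_left)
qed

lemma negseg:
  assumes "seg N d (x - c) r 0 1" shows "seg N d (c - y) r 0 1"
  unfolding seg_def
proof (intro conjI ballI)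
  fix t :: real assume t: "t \<in> {0..1}"
  have "c - y + t *\<^sub>R d = - (x - c + (1 - t) *\<^sub>R d)" by (simp add: algebra_simps)
  then have "N (c - y + t *\<^sub>R d) = N (- (x - c + (1 - t) *\<^sub>R d))" by (simp only:)
  also have "\<dots> = N (x - c + (1 - t) *\<^sub>R d)" by (rule N_minus)
  also have "\<dots> = r" using assms t by (simp add: seg_def)
  finally show "N (c - y + t *\<^sub>R d) = r" .
qed (use assms in \<open>auto simp: seg_def\<close>)

lemma radii: "rp = rq"
proof -
  have l1: "rq * cr d (x - p) = rp * cr d (q - y)" using sign cry by (simp add: algebra_simps)
  have l2: "rp * cr d (x - q) = rq * cr d (p - y)" using sign cry by (simp add: algebra_simps)
  obtain a where "a + rp * (1 - 0) / rq \<le> 1" "0 \<le> a"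
    using transfer[OF xy refl mp rp negseg[OF segQ] l1] by blast
  moreover obtain b where "b + rq * (1 - 0) / rp \<le> 1" "0 \<le> b"
    using transfer[OF xy refl mq rq negseg[OF segP] l2] by blast
  ultimately have "rp / rq \<le> 1" "rq / rp \<le> 1" by auto
  then show "rp = rq" using rp rq by (simp add: divide_le_eq)
qed

lemma crq: "cr d (x - q) = - cr d (x - p)"
proof -
  have "rq * cr d (x - q) = rq * (- cr d (x - p))" using sign radii by (simp only: mult_minus_right mult_minus_left)
  then show ?thesis using rq by (simp only: mult_cancel_left) simp
qed


lemma unique:
  assumes F1: "N (z - x) = N (z - y)" and F2: "N (z + \<epsilon> *\<^sub>R d - x) = N (z + \<epsilon> *\<^sub>R d - y)"
    and \<epsilon>: "\<epsilon> > 0"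
    and b1: "min (cr d p) (cr d q) \<le> cr d z" and b2: "cr d z \<le> max (cr d p) (cr d q)"
  shows False
proof -
  define w where "w = z - x"
  let ?h = "\<lambda>\<tau>. N (w + \<tau> *\<^sub>R d)"
  have hx: "N (z + \<tau> *\<^sub>R d - x) = ?h \<tau>" for \<tau> by (simp add: w_def algebra_simps)
  have hy: "N (z + \<tau> *\<^sub>R d - y) = ?h (\<tau> - 1)" for \<tau>
  proof -
    have "z + \<tau> *\<^sub>R d - y = w + (\<tau> - 1) *\<^sub>R d" by (simp add: w_def algebra_simps)
    then show ?thesis by simp
  qed
  have h0: "?h 0 = ?h (0 - 1)" using F1 hx[of 0] hy[of 0] by simp
  have h\<epsilon>: "?h \<epsilon> = ?h (\<epsilon> - 1)" using F2 hx[of \<epsilon>] hy[of \<epsilon>] by simp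
  define e where "e = min \<epsilon> (1/2)"
  have e: "0 < e" "e < 1" "e \<le> \<epsilon>" using \<epsilon> by (auto simp: e_def)
  have he: "?h e = ?h (e - 1)"
  proof (cases "e = \<epsilon>")
    case True then show ?thesis using h\<epsilon> by simp
  next
    case False
    then have "e < \<epsilon>" using e by simp
    then have "?h e - ?h (e - 1) \<le> ?h \<epsilon> - ?h (\<epsilon> - 1)" by (rule shift_mono)
    moreover have "?h 0 - ?h (0 - 1) \<le> ?h e - ?h (e - 1)" using e(1) by (rule shift_mono)
    ultimately show ?thesis using h0 h\<epsilon> by linarith
  qed
  define c where "c = ?h 0"
  have hm1: "?h (-1) = c" using h0 by (simp add: c_def)
  have c: "c > 0"
  proof (rule ccontr)
    assume "\<not> c > 0"
    then have "c = 0" using N_nonneg[of w] by (simp add: c_def)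
    then have "w = 0" using N_eq0 by (simp add: c_def)
    then have "?h (-1) = N (- d)" by simp
    also have "\<dots> > 0" using d0 N_pos[of "- d"] by simp
    finally show False using hm1 \<open>c = 0\<close> by simp
  qed
  have t1: "1 * ?h (e - 1) \<le> (1 - e) * ?h (-1) + e * ?h 0"
    using tp[of "-1" "e - 1" 0 w d] e by simp
  have B: "?h (e - 1) = c"
  proof -
    have "?h (e - 1) \<le> c" using t1 hm1 by (simp add: c_def algebra_simps)
    moreover have "c \<le> ?h (e - 1)"
    proof -
      have "1 * ?h 0 \<le> e * ?h (e - 1) + (1 - e) * ?h e" using tp[of "e - 1" 0 e w d] e by simp
      then have "c \<le> e * ?h (e - 1) + (1 - e) * ?h (e - 1)" using he by (simp add: c_def)
      then show ?thesis by (simp add: algebra_simps)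
    qed
    ultimately show ?thesis by simp
  qed
  have segz: "seg N d w c (-1) e"
    unfolding seg_def
  proof (intro conjI ballI)
    fix t assume "t \<in> {-1..e}"
    then show "?h t = c"
      using four_point[of "-1" "e - 1" 0 e w d c t] e hm1 B he by (simp add: c_def)
  qed (use e c in auto)
  define A where "A = cr d (x - p)"
  define Z where "Z = cr d w"
  have A0: "A \<noteq> 0" using seg_A(1)[OF d0 segP] by (simp add: A_def)
  have rat: "c * \<bar>A\<bar> = rp * \<bar>Z\<bar>" using seg_ratio[OF d0 segP segz] by (simp add: A_def Z_def)
  have big: "rp * (e - -1) / c \<le> 1"
  proof (cases "c * A = rp * Z")
    case True
    then show ?thesis using transfer[OF xy refl mp rp segz] by (auto simp: A_def Z_def)
  next
    case False
    have "\<bar>c * A\<bar> = \<bar>rp * Z\<bar>" using rat c rp by (simp add: abs_mult)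
    moreover have "\<And>u v::real. \<bar>u\<bar> = \<bar>v\<bar> \<Longrightarrow> u \<noteq> v \<Longrightarrow> u = - v" by arith
    ultimately have "c * A = - (rp * Z)" using False by blast
    moreover have "c * cr d (x - q) = - (c * A)" unfolding crq A_def by (simp add: algebra_simps)
    ultimately have "c * cr d (x - q) = rq * cr d w" using radii by (simp add: Z_def)
    then show ?thesis using transfer[OF xy refl mq rq segz] radii by auto
  qed
  have crp: "rp < c"
  proof -
    have "rp * (e + 1) \<le> c" using big c by (simp add: divide_le_eq)
    moreover have "rp < rp * (e + 1)" using rp e by simp
    ultimately show ?thesis by linarith
  qed
  have ZA: "\<bar>A\<bar> < \<bar>Z\<bar>"
  proof -
    have "rp * \<bar>A\<bar> < c * \<bar>A\<bar>" using crp A0 by simp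
    then have "rp * \<bar>A\<bar> < rp * \<bar>Z\<bar>" using rat by simp
    then show ?thesis using rp by simp
  qed
  have "cr d p = cr d x - A" "cr d q = cr d x + A" "cr d z = cr d x + Z"
    using crq by (simp_all add: A_def Z_def w_def)
  then show False using b1 b2 ZA by (auto simp: min_def max_def abs_if split: if_splits)
qed

end

context nplane begin

lemma pos_side:
  assumes d: "d \<noteq> 0" and t: "t > 1 + 2 * N a / N d"
  shows "N (a + (t - 1) *\<^sub>R d) < N (a + t *\<^sub>R d)"
proof -
  let ?g = "\<lambda>s. N (a + s *\<^sub>R d)"
  have Nd: "N d > 0" using N_pos d by blast
  have "2 * N a / N d \<ge> 0" using Nd N_nonneg[of a] by simp
  then have t1: "t - 1 > 0" using t by linarith
  have "2 * N a < (t - 1) * N d" using t Nd by (simp add: field_simps)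
  moreover have "(t - 1) * N d \<le> ?g (t - 1) + N a"
  proof -
    have "N ((t - 1) *\<^sub>R d) \<le> N (a + (t - 1) *\<^sub>R d) + N (- a)"
      using N_tri[of "a + (t - 1) *\<^sub>R d" "- a"] by simp
    then show ?thesis using t1 by (simp add: N_scale N_minus)
  qed
  ultimately have gt: "?g (t - 1) > ?g 0" by simp
  have "t * ?g (t - 1) \<le> 1 * ?g 0 + (t - 1) * ?g t" using tp[of 0 "t - 1" t a d] t1 by simp
  then have "(t - 1) * ?g (t - 1) < (t - 1) * ?g t" using gt by (simp add: algebra_simps)
  then show ?thesis using t1 by simp
qed

lemma neg_side:
  assumes d: "d \<noteq> 0" and t: "t < - (2 * N a / N d)"
  shows "N (a + t *\<^sub>R d) < N (a + (t - 1) *\<^sub>R d)"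
proof -
  let ?g = "\<lambda>s. N (a + s *\<^sub>R d)"
  have Nd: "N d > 0" using N_pos d by blast
  have "2 * N a / N d \<ge> 0" using Nd N_nonneg[of a] by simp
  then have t0: "t < 0" using t by linarith
  have "2 * N a < (- t) * N d" using t Nd by (simp add: field_simps)
  moreover have "(- t) * N d \<le> ?g t + N a"
  proof -
    have "N (t *\<^sub>R d) \<le> N (a + t *\<^sub>R d) + N (- a)"
      using N_tri[of "a + t *\<^sub>R d" "- a"] by simp
    then show ?thesis using t0 by (simp add: N_scale N_minus)
  qed
  ultimately have gt: "?g t > ?g 0" by simp
  have "(0 - (t - 1)) * ?g t \<le> (0 - t) * ?g (t - 1) + (t - (t - 1)) * ?g 0"
    using tp[of "t - 1" t 0 a d] t0 by simp
  then have "(- t) * ?g t < (- t) * ?g (t - 1)" using gt by (simp add: algebra_simps)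
  then show ?thesis using t0 by simp
qed

end

lemma hull_char:
  fixes p q d v :: "real^2"
  assumes d: "d \<noteq> 0"
  shows "v \<in> convex hull (par_line p d \<union> par_line q d) \<longleftrightarrow>
         min (cr d p) (cr d q) \<le> cr d v \<and> cr d v \<le> max (cr d p) (cr d q)"
proof
  let ?S = "{v. min (cr d p) (cr d q) \<le> cr d v \<and> cr d v \<le> max (cr d p) (cr d q)}"
  have cS: "convex ?S"
  proof (rule convexI)
    fix u w :: "real^2" and a b :: real
    assume u: "u \<in> ?S" and w: "w \<in> ?S" and ab0: "0 \<le> a" "0 \<le> b" "a + b = 1"
    then have ab: "0 \<le> a \<and> 0 \<le> b \<and> a + b = 1" by simp
    let ?m = "min (cr d p) (cr d q)" and ?M = "max (cr d p) (cr d q)"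
    have "a * ?m \<le> a * cr d u" "b * ?m \<le> b * cr d w" "a * cr d u \<le> a * ?M" "b * cr d w \<le> b * ?M"
      using u w ab by (auto intro: mult_left_mono)
    moreover have "a * ?m + b * ?m = ?m" "a * ?M + b * ?M = ?M" using ab by (simp_all add: distrib_right[symmetric])
    ultimately show "a *\<^sub>R u + b *\<^sub>R w \<in> ?S" by simp
  qed
  have sub: "par_line p d \<union> par_line q d \<subseteq> ?S" by (auto simp: par_line_def)
  assume "v \<in> convex hull (par_line p d \<union> par_line q d)"
  then show "min (cr d p) (cr d q) \<le> cr d v \<and> cr d v \<le> max (cr d p) (cr d q)"
  proof -
    have "convex hull (par_line p d \<union> par_line q d) \<subseteq> ?S" by (intro hull_minimal sub cS)
    then show ?thesis using \<open>v \<in> _\<close> by blast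
  qed
next
  assume v: "min (cr d p) (cr d q) \<le> cr d v \<and> cr d v \<le> max (cr d p) (cr d q)"
  let ?H = "convex hull (par_line p d \<union> par_line q d)"
  have inp: "p + t *\<^sub>R d \<in> ?H" for t by (rule hull_inc) (auto simp: par_line_def)
  have inq: "q + t *\<^sub>R d \<in> ?H" for t by (rule hull_inc) (auto simp: par_line_def)
  show "v \<in> ?H"
  proof (cases "cr d p = cr d q")
    case True
    then have "cr d (v - p) = 0" using v by simp
    then obtain t where "v - p = t *\<^sub>R d" using cr_ker d by blast
    then have "v = p + t *\<^sub>R d" by (simp add: algebra_simps)
    then show ?thesis using inp by simp
  next
    case False
    define l where "l = (cr d v - cr d p) / (cr d q - cr d p)"
    have l: "0 \<le> l" "l \<le> 1"
      using v False by (auto simp: l_def min_def max_def divide_simps split: if_splits)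
    have "cr d v = cr d p + l * (cr d q - cr d p)" using False by (simp add: l_def)
    then have "cr d (v - ((1 - l) *\<^sub>R p + l *\<^sub>R q)) = 0" by (simp add: algebra_simps)
    then obtain t where t: "v - ((1 - l) *\<^sub>R p + l *\<^sub>R q) = t *\<^sub>R d" using cr_ker d by blast
    show ?thesis
    proof (cases "l = 1")
      case True
      then have "v = q + t *\<^sub>R d" using t by (simp add: algebra_simps)
      then show ?thesis using inq by simp
    next
      case False
      then have l1: "1 - l > 0" using l by simp
      have "v = (1 - l) *\<^sub>R (p + (t / (1 - l)) *\<^sub>R d) + l *\<^sub>R (q + 0 *\<^sub>R d)"
      proof -
        have e: "(1 - l) *\<^sub>R (p + (t / (1 - l)) *\<^sub>R d) = (1 - l) *\<^sub>R p + t *\<^sub>R d"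
          using l1 by (simp add: scaleR_add_right)
        show ?thesis unfolding e using t by (simp add: algebra_simps)
      qed
      also have "\<dots> \<in> ?H"
        by (rule convexD[OF convex_convex_hull inp inq]) (use l in auto)
      finally show ?thesis .
    qed
  qed
qed

context setting begin

definition "KK = {z. N (z - x) = N (z - y) \<and> min (cr d p) (cr d q) \<le> cr d z \<and> cr d z \<le> max (cr d p) (cr d q)}"

lemma K_eq: "bis N x y \<inter> convex hull (par_line p d \<union> par_line q d) = KK"
  using hull_char[OF d0] by (auto simp: KK_def bis_def)

lemma K_inj: "inj_on (cr d) KK"
proof (rule inj_onI)
  fix z1 z2 assume z1: "z1 \<in> KK" and z2: "z2 \<in> KK" and eq: "cr d z1 = cr d z2"
  then have "cr d (z2 - z1) = 0" by simp
  then obtain e where e: "z2 - z1 = e *\<^sub>R d" using cr_ker d0 by blast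
  show "z1 = z2"
  proof (cases e "0::real" rule: linorder_cases)
    case equal then show ?thesis using e by simp
  next
    case greater
    have "z2 = z1 + e *\<^sub>R d" using e by (simp add: algebra_simps)
    then show ?thesis using unique[of z1 e] z1 z2 greater by (auto simp: KK_def)
  next
    case less
    have "z1 = z2 + (- e) *\<^sub>R d" using e by (simp add: algebra_simps)
    then show ?thesis using unique[of z2 "- e"] z1 z2 less by (auto simp: KK_def)
  qed
qed

lemma K_closed: "closed KK"
proof -
  have e: "KK = {z. N (z - x) = N (z - y)} \<inter> {z. min (cr d p) (cr d q) \<le> cr d z} \<inter> {z. cr d z \<le> max (cr d p) (cr d q)}"
    by (auto simp: KK_def)
  have c1: "continuous_on UNIV (\<lambda>z. N (z - x))" by (rule N_cont_comp) (intro continuous_intros)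
  have c2: "continuous_on UNIV (\<lambda>z. N (z - y))" by (rule N_cont_comp) (intro continuous_intros)
  have "closed {z. N (z - x) = N (z - y)}"
    by (rule closed_Collect_eq[OF c1 c2])
  moreover have "closed {z. min (cr d p) (cr d q) \<le> cr d z}"
    by (rule closed_Collect_le) (simp_all add: cr_cont)
  moreover have "closed {z. cr d z \<le> max (cr d p) (cr d q)}"
    by (rule closed_Collect_le) (simp_all add: cr_cont)
  ultimately show ?thesis unfolding e by (intro closed_Int)
qed

lemma K_bounded: "bounded KK"
proof -
  obtain n where n: "cr d n = 1" using cr_transversal[OF d0] by blast
  have Nd: "N d > 0" using N_pos d0 by blast
  define Mc where "Mc = \<bar>cr d p - cr d x\<bar> + \<bar>cr d q - cr d x\<bar>"
  define B where "B = norm x + Mc * norm n + (1 + 2 * (Mc * N n) / N d) * norm d"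
  have "norm z \<le> B" if z: "z \<in> KK" for z
  proof -
    define A where "A = (cr d z - cr d x) *\<^sub>R n"
    have "cr d (z - x - A) = 0" using n by (simp add: A_def)
    then obtain t where t: "z - x - A = t *\<^sub>R d" using cr_ker d0 by blast
    have zx: "z - x = A + t *\<^sub>R d" using t by (simp add: algebra_simps)
    have zy: "z - y = A + (t - 1) *\<^sub>R d" using t by (simp add: algebra_simps)
    have eqN: "N (A + t *\<^sub>R d) = N (A + (t - 1) *\<^sub>R d)" using z zx zy by (simp add: KK_def)
    have t1: "t \<le> 1 + 2 * N A / N d"
    proof (rule ccontr)
      assume "\<not> ?thesis"
      then have "N (A + (t - 1) *\<^sub>R d) < N (A + t *\<^sub>R d)" by (intro pos_side[OF d0]) simp
      then show False using eqN by simp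
    qed
    have t2: "- (2 * N A / N d) \<le> t"
    proof (rule ccontr)
      assume "\<not> ?thesis"
      then have "N (A + t *\<^sub>R d) < N (A + (t - 1) *\<^sub>R d)" by (intro neg_side[OF d0]) simp
      then show False using eqN by simp
    qed
    have czx: "\<bar>cr d z - cr d x\<bar> \<le> Mc" using z by (auto simp: KK_def Mc_def min_def max_def split: if_splits)
    have NA: "N A \<le> Mc * N n" using czx N_nonneg[of n] by (simp add: A_def N_scale mult_right_mono)
    have "2 * N A / N d \<le> 2 * (Mc * N n) / N d" using NA Nd by (simp add: divide_right_mono)
    moreover have "0 \<le> 2 * N A / N d" using Nd N_nonneg[of A] by simp
    ultimately have tb: "\<bar>t\<bar> \<le> 1 + 2 * (Mc * N n) / N d" using t1 t2 by linarith
    have "z = x + A + t *\<^sub>R d" using zx by (simp add: algebra_simps)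
    then have "norm z \<le> norm x + norm A + norm (t *\<^sub>R d)"
      using norm_triangle_ineq[of "x + A" "t *\<^sub>R d"] norm_triangle_ineq[of x A] by simp
    also have "norm A \<le> Mc * norm n" using czx by (simp add: A_def mult_right_mono)
    also have "norm (t *\<^sub>R d) \<le> (1 + 2 * (Mc * N n) / N d) * norm d" using tb by (simp add: mult_right_mono)
    finally show ?thesis by (simp add: B_def)
  qed
  then show ?thesis unfolding bounded_iff by blast
qed

lemma K_compact: "compact KK"
  using K_closed K_bounded by (simp add: compact_eq_bounded_closed)

lemma K_image: "cr d ` KK = {min (cr d p) (cr d q) .. max (cr d p) (cr d q)}"
proof
  show "cr d ` KK \<subseteq> {min (cr d p) (cr d q) .. max (cr d p) (cr d q)}" by (auto simp: KK_def)
next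
  show "{min (cr d p) (cr d q) .. max (cr d p) (cr d q)} \<subseteq> cr d ` KK"
  proof
    fix s assume s: "s \<in> {min (cr d p) (cr d q) .. max (cr d p) (cr d q)}"
    obtain n where n: "cr d n = 1" using cr_transversal[OF d0] by blast
    have Nd: "N d > 0" using N_pos d0 by blast
    define A where "A = (s - cr d x) *\<^sub>R n"
    define G where "G = (\<lambda>t. N (A + t *\<^sub>R d) - N (A + (t - 1) *\<^sub>R d))"
    define T1 where "T1 = - (2 * N A / N d) - 1"
    define T2 where "T2 = 2 + 2 * N A / N d"
    have "0 \<le> 2 * N A / N d" using Nd N_nonneg[of A] by simp
    then have T12: "T1 \<le> T2" by (simp add: T1_def T2_def)
    have "G T1 < 0" using neg_side[OF d0, where t=T1 and a=A] by (simp add: G_def T1_def)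
    moreover have "G T2 > 0" using pos_side[OF d0, where t=T2 and a=A] by (simp add: G_def T2_def)
    moreover have "continuous_on {T1..T2} G" unfolding G_def
      by (intro continuous_on_diff N_cont_comp) (intro continuous_intros)+
    ultimately have "\<exists>t. T1 \<le> t \<and> t \<le> T2 \<and> G t = 0" using T12 by (intro IVT') auto
    then obtain t where t: "G t = 0" by blast
    define z where "z = x + A + t *\<^sub>R d"
    have "z - x = A + t *\<^sub>R d" "z - y = A + (t - 1) *\<^sub>R d" by (simp_all add: z_def algebra_simps)
    then have "N (z - x) = N (z - y)" using t by (simp add: G_def)
    moreover have "cr d z = s" using n by (simp add: z_def A_def cry)
    ultimately show "s \<in> cr d ` KK" using s by (auto simp: KK_def)
  qed
qed


lemma lin_image:
  fixes a b :: real
  shows "(\<lambda>s. a + s * (b - a)) ` {0..1} = {min a b .. max a b}"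
proof
  show "(\<lambda>s. a + s * (b - a)) ` {0..1} \<subseteq> {min a b .. max a b}"
  proof
    fix v assume "v \<in> (\<lambda>s. a + s * (b - a)) ` {0..1}"
    then obtain s where s: "0 \<le> s" "s \<le> 1" "v = a + s * (b - a)" by auto
    show "v \<in> {min a b .. max a b}"
    proof -
      have e1: "v - a = s * (b - a)" and e2: "b - v = (1 - s) * (b - a)" using s(3) by (simp_all add: algebra_simps)
      have "0 \<le> s" "0 \<le> 1 - s" using s by auto
      then show ?thesis
      proof (cases "a \<le> b")
        case True
        then have "0 \<le> s * (b - a)" "0 \<le> (1 - s) * (b - a)" using \<open>0 \<le> s\<close> \<open>0 \<le> 1 - s\<close> by simp_all
        then show ?thesis using True e1 e2 by auto
      next
        case False
        then have "s * (b - a) \<le> 0" "(1 - s) * (b - a) \<le> 0"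
          using \<open>0 \<le> s\<close> \<open>0 \<le> 1 - s\<close> by (simp_all add: mult_nonneg_nonpos)
        then show ?thesis using False e1 e2 by auto
      qed
    qed
  qed
next
  show "{min a b .. max a b} \<subseteq> (\<lambda>s. a + s * (b - a)) ` {0..1}"
  proof
    fix v assume v: "v \<in> {min a b .. max a b}"
    show "v \<in> (\<lambda>s. a + s * (b - a)) ` {0..1}"
    proof (cases "a = b")
      case True then show ?thesis using v by (auto intro!: image_eqI[of _ _ 0])
    next
      case False
      define s where "s = (v - a) / (b - a)"
      have "a + s * (b - a) = v" using False by (simp add: s_def)
      moreover have "0 \<le> s" "s \<le> 1" using v False
        by (auto simp: s_def min_def max_def divide_simps split: if_splits)
      ultimately show ?thesis by (auto intro!: image_eqI[of _ _ s])
    qed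
  qed
qed

lemma p_in: "p \<in> KK" and q_in: "q \<in> KK"
proof -
  have xs: "x \<in> closed_segment x y" and ys: "y \<in> closed_segment x y" by (rule ends_in_segment)+
  have s1: "closed_segment x y \<subseteq> ncircle N p rp" using mp by (simp add: maximal_segment_def)
  have s2: "closed_segment x y \<subseteq> ncircle N q rq" using mq by (simp add: maximal_segment_def)
  have "x \<in> ncircle N p rp" "y \<in> ncircle N p rp" "x \<in> ncircle N q rq" "y \<in> ncircle N q rq"
    using xs ys s1 s2 by blast+
  then have "N (x - p) = N (y - p)" "N (x - q) = N (y - q)" by (simp_all add: ncircle_def)
  then have "N (p - x) = N (p - y)" "N (q - x) = N (q - y)"
    using N_commute[of p x] N_commute[of p y] N_commute[of q x] N_commute[of q y] by simp_all
  then show "p \<in> KK" "q \<in> KK" by (auto simp: KK_def)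
qed

lemma main:
  "\<exists>g. arc g \<and> pathstart g = p \<and> pathfinish g = q \<and>
     path_image g = bis N x y \<inter> convex hull (par_line p (y - x) \<union> par_line q (y - x))"
proof -
  define a where "a = cr d p"
  define b where "b = cr d q"
  define I where "I = {min a b .. max a b}"
  have cc: "continuous_on KK (cr d)" by (rule cr_cont)
  obtain g' where h: "homeomorphism KK I (cr d) g'"
    using homeomorphism_compact[OF K_compact cc _ K_inj] K_image by (auto simp: I_def a_def b_def)
  have g1: "\<And>z. z \<in> KK \<Longrightarrow> g' (cr d z) = z" and g2: "\<And>v. v \<in> I \<Longrightarrow> cr d (g' v) = v"
    and g3: "g' ` I = KK" and g4: "continuous_on I g'"
    using h by (auto simp: homeomorphism_def)
  have ab: "a \<noteq> b"
  proof
    assume "a = b"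
    then have "p = q" using K_inj p_in q_in by (auto simp: a_def b_def inj_on_def)
    then show False using pq by simp
  qed
  define L where "L = (\<lambda>s::real. a + s * (b - a))"
  define \<gamma> where "\<gamma> = g' \<circ> L"
  have LI: "L ` {0..1} = I" unfolding L_def I_def by (rule lin_image)
  have "continuous_on {0..1} L" unfolding L_def by (intro continuous_intros)
  then have pth: "path \<gamma>" unfolding path_def \<gamma>_def
    by (rule continuous_on_compose) (use g4 LI in simp)
  have inj: "inj_on \<gamma> {0..1}"
  proof (rule inj_onI)
    fix s1 s2 assume s: "s1 \<in> {0..1}" "s2 \<in> {0..1}" and e: "\<gamma> s1 = \<gamma> s2"
    have "L s1 \<in> I" "L s2 \<in> I" using s LI by auto
    then have "L s1 = L s2" using e g2 unfolding \<gamma>_def by (metis comp_apply)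
    then have "s1 * (b - a) = s2 * (b - a)" by (simp add: L_def)
    then show "s1 = s2" using ab by simp
  qed
  have "pathstart \<gamma> = p" using g1[OF p_in] by (simp add: pathstart_def \<gamma>_def L_def a_def)
  moreover have "pathfinish \<gamma> = q" using g1[OF q_in] by (simp add: pathfinish_def \<gamma>_def L_def b_def)
  moreover have "path_image \<gamma> = KK" unfolding path_image_def \<gamma>_def image_comp[symmetric] LI g3 ..
  ultimately show ?thesis using pth inj K_eq by (auto simp: arc_def)
qed

end

theorem proposition2p4:
  fixes N :: "real^2 \<Rightarrow> real" and x y p q :: "real^2" and rp rq :: real
  assumes "is_norm N"
    and "x \<noteq> y"
    and "\<exists>a b. a \<noteq> b \<and> closed_segment a b \<subseteq> unit_circle N \<and> seg_parallel x y a b"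
    and "p \<noteq> q"
    and "rp > 0" and "maximal_segment (ncircle N p rp) x y"
    and "rq > 0" and "maximal_segment (ncircle N q rq) x y"
  shows "\<exists>g. arc g \<and> pathstart g = p \<and> pathfinish g = q \<and>
           path_image g = bis N x y \<inter> convex hull (par_line p (y - x) \<union> par_line q (y - x))"
proof -
  interpret setting N x y p q rp rq
    by unfold_locales (use assms in auto)
  show ?thesis by (rule main)
qed

end
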